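(* Let $(\mathcal F,d)$ be a metric space, $\Sigma=(\Sigma_M)_{M\in\mathbb N}$ a sequence of non-empty subsets of $\mathcal F$ and $\mathcal C\subset\mathcal F$ non-empty. If $\Sigma$ is $\gamma$-encodable for every $\gamma<\gamma^*(\mathcal C|\Sigma)$ (with $\gamma>0$), then $\gamma^*(\mathcal C|\Sigma)\le\gamma^*_e(\mathcal C)$.
   Context: Approximation speed: $\gamma^*(\mathcal C|\Sigma)=\sup\{\gamma\in\mathbb R:\sup_{f\in\mathcal C}\inf_{\Phi\in\Sigma_M}d(f,\Phi)=O(M^{-\gamma})\text{ as }M\to\infty\}\in[-\infty,\infty]$ ($\sup\emptyset=-\infty$). A finite $X\subset\mathcal C$ is an $\varepsilon$-covering of $\mathcal C$ if every point of $\mathcal C$ is within distance $\varepsilon$ of some point of $X$; $N(\mathcal C,d,\varepsilon)$ is the minimal size of such a covering ($+\infty$ if none), $H=\log_2N$, and $\gamma^*_e(\mathcal C)=\sup\{\gamma>0:H(\mathcal C,d,\varepsilon)=O(\varepsilon^{-1/\gamma})\text{ as }\varepsilon\to0\}$ ($0$ if empty). For $\gamma,h>0$, a $(\gamma,h)$-encoding of $\Sigma$ is a sequence $(\Sigma(\gamma,h)_M)_M$ such that for some $c_1,c_2>0$ and all $M$, $\Sigma(\gamma,h)_M$ is a $c_1M^{-\gamma}$-covering of $\Sigma_M$ with $\log_2|\Sigma(\gamma,h)_M|\le c_2M^{1+h}$. $\Sigma$ is $\gamma$-encodable if it admits a $(\gamma,h)$-encoding for every $h>0$. *)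

theory Defs
  imports "HOL-Analysis.Analysis" "HOL-Library.Extended_Real" "HOL-Library.Extended_Nat"
begin

definition approx_error :: "'a::metric_space set \<Rightarrow> (nat \<Rightarrow> 'a set) \<Rightarrow> nat \<Rightarrow> ereal" where
  "approx_error C \<Sigma> M = (SUP f\<in>C. INF \<Phi>\<in>\<Sigma> M. ereal (dist f \<Phi>))"

text \<open>Approximation speed gamma*(C|Sigma) in [-inf, inf]; Sup of the empty set is -inf.\<close>
definition approx_speed :: "'a::metric_space set \<Rightarrow> (nat \<Rightarrow> 'a set) \<Rightarrow> ereal" where
  "approx_speed C \<Sigma> = Sup (ereal ` {\<gamma>::real. \<exists>c::real.
      \<forall>\<^sub>F M in sequentially. approx_error C \<Sigma> M \<le> ereal (c * real M powr (-\<gamma>))})"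

definition is_covering :: "'a::metric_space set \<Rightarrow> 'a set \<Rightarrow> real \<Rightarrow> bool" where
  "is_covering C X \<epsilon> \<longleftrightarrow> finite X \<and> X \<subseteq> C \<and> (\<forall>x\<in>C. \<exists>y\<in>X. dist x y \<le> \<epsilon>)"

definition covering_number :: "'a::metric_space set \<Rightarrow> real \<Rightarrow> enat" where
  "covering_number C \<epsilon> =
     (if \<exists>X. is_covering C X \<epsilon>
      then enat (LEAST n. \<exists>X. is_covering C X \<epsilon> \<and> card X = n) else \<infinity>)"

definition metric_entropy :: "'a::metric_space set \<Rightarrow> real \<Rightarrow> ereal" where
  "metric_entropy C \<epsilon> = (case covering_number C \<epsilon> of enat n \<Rightarrow> ereal (log 2 (real n)) | \<infinity> \<Rightarrow> \<infinity>)"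

definition entropy_speed_set :: "'a::metric_space set \<Rightarrow> real set" where
  "entropy_speed_set C = {\<gamma>::real. \<gamma> > 0 \<and> (\<exists>c::real.
      \<forall>\<^sub>F \<epsilon> in at_right 0. metric_entropy C \<epsilon> \<le> ereal (c * \<epsilon> powr (-1/\<gamma>)))}"

definition entropy_speed :: "'a::metric_space set \<Rightarrow> ereal" where
  "entropy_speed C = (if entropy_speed_set C = {} then 0 else Sup (ereal ` entropy_speed_set C))"

definition is_encoding :: "(nat \<Rightarrow> 'a::metric_space set) \<Rightarrow> real \<Rightarrow> real \<Rightarrow> (nat \<Rightarrow> 'a set) \<Rightarrow> bool" where
  "is_encoding \<Sigma> \<gamma> h E \<longleftrightarrow> (\<exists>c1 c2::real. c1 > 0 \<and> c2 > 0 \<and>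
     (\<forall>M\<ge>1. is_covering (\<Sigma> M) (E M) (c1 * real M powr (-\<gamma>)) \<and>
              log 2 (real (card (E M))) \<le> c2 * real M powr (1 + h)))"

definition encodable :: "(nat \<Rightarrow> 'a::metric_space set) \<Rightarrow> real \<Rightarrow> bool" where
  "encodable \<Sigma> \<gamma> \<longleftrightarrow> (\<forall>h>0. \<exists>E. is_encoding \<Sigma> \<gamma> h E)"

end

theory Submission
  imports Defs
begin

lemma internal_cover:
  fixes C E :: "'a::metric_space set"
  assumes "finite E" "\<forall>x\<in>C. \<exists>e\<in>E. dist x e \<le> \<rho>"
  shows "\<exists>X. finite X \<and> X \<subseteq> C \<and> card X \<le> card E \<and> (\<forall>x\<in>C. \<exists>y\<in>X. dist x y \<le> 2*\<rho>)"
proof -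
  define E' where "E' = {e\<in>E. \<exists>x\<in>C. dist x e \<le> \<rho>}"
  define g where "g e = (SOME x. x\<in>C \<and> dist x e \<le> \<rho>)" for e
  have g: "g e \<in> C \<and> dist (g e) e \<le> \<rho>" if "e\<in>E'" for e
  proof -
    have "\<exists>x. x\<in>C \<and> dist x e \<le> \<rho>" using that unfolding E'_def by auto
    from someI_ex[OF this] show ?thesis unfolding g_def by auto
  qed
  have fE': "finite E'" using assms(1) unfolding E'_def by auto
  have "card (g ` E') \<le> card E'" by (rule card_image_le[OF fE'])
  also have "\<dots> \<le> card E" using assms(1) unfolding E'_def by (intro card_mono) auto
  finally have c: "card (g ` E') \<le> card E" .
  have "\<forall>x\<in>C. \<exists>y\<in>g ` E'. dist x y \<le> 2*\<rho>"
  proof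
    fix x assume x: "x \<in> C"
    then obtain e where e: "e \<in> E" "dist x e \<le> \<rho>" using assms(2) by auto
    hence eE: "e \<in> E'" using x unfolding E'_def by auto
    have "dist x (g e) \<le> dist x e + dist (g e) e" by (rule dist_triangle2)
    also have "\<dots> \<le> 2*\<rho>" using g[OF eE] e by simp
    finally show "\<exists>y\<in>g ` E'. dist x y \<le> 2*\<rho>" using eE by auto
  qed
  thus ?thesis using c fE' g by (intro exI[of _ "g ` E'"]) auto
qed

lemma ent_bound:
  fixes C X :: "'a::metric_space set"
  assumes "C \<noteq> {}" "finite X" "X \<subseteq> C" "\<forall>x\<in>C. \<exists>y\<in>X. dist x y \<le> \<epsilon>" "card X \<le> n"
  shows "metric_entropy C \<epsilon> \<le> ereal (log 2 (real n))"
proof -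
  have cov: "is_covering C X \<epsilon>" using assms unfolding is_covering_def by auto
  define m where "m = (LEAST n. \<exists>X. is_covering C X \<epsilon> \<and> card X = n)"
  have "covering_number C \<epsilon> = enat m" using cov unfolding covering_number_def m_def by auto
  hence me: "metric_entropy C \<epsilon> = ereal (log 2 (real m))" by (simp add: metric_entropy_def)
  have "m \<le> card X" unfolding m_def by (rule Least_le) (use cov in auto)
  obtain Y where Y: "is_covering C Y \<epsilon>" "card Y = m"
    using LeastI[of "\<lambda>n. \<exists>X. is_covering C X \<epsilon> \<and> card X = n" "card X"] cov unfolding m_def by auto
  have "Y \<noteq> {}" using Y(1) assms(1) unfolding is_covering_def by auto
  hence "m > 0" using Y unfolding is_covering_def by auto
  moreover have "m \<le> n" using \<open>m \<le> card X\<close> assms(5) by simp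
  ultimately have "log 2 (real m) \<le> log 2 (real n)" by (subst log_le_cancel_iff) auto
  thus ?thesis using me by simp
qed

theorem mainTheorem10:
  fixes \<Sigma> :: "nat \<Rightarrow> 'a::metric_space set" and C :: "'a set"
  assumes "\<And>M. M \<ge> 1 \<Longrightarrow> \<Sigma> M \<noteq> {}"
    and "C \<noteq> {}"
    and "\<And>\<gamma>. \<gamma> > 0 \<Longrightarrow> ereal \<gamma> < approx_speed C \<Sigma> \<Longrightarrow> encodable \<Sigma> \<gamma>"
  shows "approx_speed C \<Sigma> \<le> entropy_speed C"
proof -
  have nonneg: "0 \<le> entropy_speed C"
  proof (cases "entropy_speed_set C = {}")
    case True thus ?thesis by (simp add: entropy_speed_def)
  next
    case False
    then obtain g where g: "g \<in> entropy_speed_set C" by auto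
    hence "0 < g" by (simp add: entropy_speed_set_def)
    moreover have "ereal g \<le> Sup (ereal ` entropy_speed_set C)" using g by (intro Sup_upper) auto
    ultimately have "0 \<le> Sup (ereal ` entropy_speed_set C)"
      by (meson ereal_less_eq(5) less_imp_le order_trans)
    thus ?thesis using False unfolding entropy_speed_def by simp
  qed
  have key: "ereal r \<le> entropy_speed C" if r0: "0 < r" and rlt: "ereal r < approx_speed C \<Sigma>" for r
  proof -
    obtain g1 c M0 where g1: "r < g1" and ev: "\<forall>\<^sub>F M in sequentially. approx_error C \<Sigma> M \<le> ereal (c * real M powr (-g1))"
      using rlt unfolding approx_speed_def less_Sup_iff by auto
    define g where "g = (r + g1)/2"
    have rg: "r < g" "g < g1" using g1 unfolding g_def by auto
    have "ereal g1 \<le> approx_speed C \<Sigma>" unfolding approx_speed_def using ev by (intro Sup_upper) auto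
    moreover have "ereal g < ereal g1" using rg(2) by simp
    ultimately have "ereal g < approx_speed C \<Sigma>" by (rule_tac less_le_trans) auto
    hence enc: "encodable \<Sigma> g" using assms(3) rg r0 by auto
    define h where "h = g / r - 1"
    have h0: "h > 0" using rg r0 unfolding h_def by (simp add: field_simps)
    have h1: "1 + h = g / r" unfolding h_def by simp
    obtain E where "is_encoding \<Sigma> g h E" using enc h0 unfolding encodable_def by auto
    then obtain c1 c2 where c1: "c1 > 0" and c2: "c2 > 0" and
      encM: "\<And>M. M \<ge> 1 \<Longrightarrow> is_covering (\<Sigma> M) (E M) (c1 * real M powr (-g)) \<and>
              log 2 (real (card (E M))) \<le> c2 * real M powr (1 + h)"
      unfolding is_encoding_def by auto
    obtain M0 where M0: "\<And>M. M \<ge> M0 \<Longrightarrow> approx_error C \<Sigma> M \<le> ereal (c * real M powr (-g1))"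
      using ev unfolding eventually_sequentially by auto
    define K where "K = \<bar>c\<bar> + 1 + c1"
    have K0: "K > 0" using c1 unfolding K_def by simp
    define N where "N = max M0 1"
    have cov: "\<forall>f\<in>C. \<exists>e\<in>E M. dist f e \<le> K * real M powr (-g)" if "M \<ge> N" for M
    proof
      fix f assume f: "f \<in> C"
      have M1: "M \<ge> 1" "M \<ge> M0" using that unfolding N_def by auto
      have "(INF \<Phi>\<in>\<Sigma> M. ereal (dist f \<Phi>)) \<le> approx_error C \<Sigma> M"
        unfolding approx_error_def using f by (intro SUP_upper)
      also have "\<dots> \<le> ereal (c * real M powr (-g1))" using M0 M1 by auto
      also have "\<dots> < ereal ((c + 1) * real M powr (-g1))" using M1 by (simp add: algebra_simps)
      finally obtain \<Phi> where \<Phi>: "\<Phi> \<in> \<Sigma> M" "dist f \<Phi> < (c + 1) * real M powr (-g1)"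
        unfolding INF_less_iff by auto
      obtain e where e: "e \<in> E M" "dist \<Phi> e \<le> c1 * real M powr (-g)"
        using encM[OF M1(1)] \<Phi>(1) unfolding is_covering_def by blast
      have pw: "real M powr (-g1) \<le> real M powr (-g)" using M1 rg by (intro powr_mono) auto
      have "(c + 1) * real M powr (-g1) \<le> (\<bar>c\<bar> + 1) * real M powr (-g)"
        using pw by (intro mult_mono) auto
      hence "dist f e \<le> dist f \<Phi> + dist \<Phi> e" "dist f \<Phi> \<le> (\<bar>c\<bar> + 1) * real M powr (-g)"
        using \<Phi> by (auto intro: dist_triangle)
      hence "dist f e \<le> K * real M powr (-g)" using e unfolding K_def by (simp add: algebra_simps)
      thus "\<exists>e\<in>E M. dist f e \<le> K * real M powr (-g)" using e by auto
    qed
    have entM: "metric_entropy C \<epsilon> \<le> ereal (c2 * real M powr (1+h))"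
      if MN: "M \<ge> N" and le: "2*K*real M powr (-g) \<le> \<epsilon>" for M \<epsilon>
    proof -
      have M1: "M \<ge> 1" using MN unfolding N_def by auto
      have fin: "finite (E M)" using encM[OF M1] unfolding is_covering_def by auto
      obtain X where X: "finite X" "X \<subseteq> C" "card X \<le> card (E M)"
        "\<forall>x\<in>C. \<exists>y\<in>X. dist x y \<le> 2*(K * real M powr (-g))"
        using internal_cover[OF fin cov[OF MN]] by blast
      have "\<forall>x\<in>C. \<exists>y\<in>X. dist x y \<le> \<epsilon>" using X(4) le by force
      hence "metric_entropy C \<epsilon> \<le> ereal (log 2 (real (card (E M))))"
        using ent_bound[OF assms(2) X(1,2) _ X(3)] by blast
      also have "\<dots> \<le> ereal (c2 * real M powr (1+h))" using encM[OF M1] by simp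
      finally show ?thesis .
    qed
    define c' where "c' = c2 * 2 powr (g/r) * (2*K) powr (1/r)"
    have N1: "real N \<ge> 1" unfolding N_def by auto
    have g0: "g > 0" using rg r0 by auto
    have "\<forall>\<^sub>F \<epsilon> in at_right 0. metric_entropy C \<epsilon> \<le> ereal (c' * \<epsilon> powr (-1/r))"
      unfolding eventually_at_right_field
    proof (intro exI[of _ "2*K*real N powr (-g)"] conjI allI impI)
      show "0 < 2*K*real N powr (-g)" using K0 N1 by simp
      fix \<epsilon> :: real assume e0: "0 < \<epsilon>" and e1: "\<epsilon> < 2*K*real N powr (-g)"
      define t where "t = (2*K/\<epsilon>) powr (1/g)"
      have Ng: "real N powr (-g) = 1 / real N powr g" using N1 by (simp add: powr_minus_divide)
      have "\<epsilon> * real N powr g < 2*K" using e1 N1 unfolding Ng by (simp add: field_simps)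
      hence NgK: "real N powr g \<le> 2*K/\<epsilon>" using e0 by (simp add: field_simps)
      have "real N = (real N powr g) powr (1/g)" using N1 g0 by (simp add: powr_powr)
      also have "\<dots> \<le> t" unfolding t_def using NgK g0 N1 by (intro powr_mono2) auto
      finally have tN: "real N \<le> t" .
      have t1: "t \<ge> 1" using tN N1 by simp
      define M where "M = nat \<lceil>t\<rceil>"
      have Mt: "t \<le> real M" "real M \<le> t + 1" unfolding M_def using t1 by linarith+
      have MN: "M \<ge> N" using Mt tN by linarith
      have "real M powr (-g) \<le> t powr (-g)" using Mt t1 g0 by (intro powr_mono2') auto
      also have "t powr (-g) = (2*K/\<epsilon>) powr (-1)" unfolding t_def using g0 by (simp add: powr_powr)
      also have "\<dots> = \<epsilon> / (2*K)" using e0 K0 by (simp add: powr_minus_divide)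
      finally have "2*K*real M powr (-g) \<le> \<epsilon>" using K0 by (simp add: field_simps)
      from entM[OF MN this] have A: "metric_entropy C \<epsilon> \<le> ereal (c2 * real M powr (1 + h))" .
      have P1: "t powr (g/r) = (2*K/\<epsilon>) powr (1/r)" unfolding t_def using g0 r0 by (simp add: powr_powr)
      have P2: "(2*K/\<epsilon>) powr (1/r) = (2*K) powr (1/r) / \<epsilon> powr (1/r)" by (rule powr_divide)
      have P3: "\<epsilon> powr (-1/r) = 1 / \<epsilon> powr (1/r)"
      proof -
        have "-1/r = -(1/r)" by simp
        thus ?thesis using powr_minus_divide[of \<epsilon> "1/r"] by (simp only:)
      qed
      have P4: "(2*t) powr (1+h) = 2 powr (g/r) * t powr (g/r)" unfolding h1 using t1 by (simp add: powr_mult)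
      have "real M powr (1+h) \<le> (2*t) powr (1+h)" using Mt t1 h0 by (intro powr_mono2) auto
      also have "\<dots> = 2 powr (g/r) * ((2*K) powr (1/r) * \<epsilon> powr (-1/r))"
        unfolding P4 P1 P2 P3 by simp
      finally have "c2 * real M powr (1 + h) \<le> c2 * (2 powr (g/r) * ((2*K) powr (1/r) * \<epsilon> powr (-1/r)))"
        using c2 by (intro mult_left_mono) auto
      also have "\<dots> = c' * \<epsilon> powr (-1/r)" unfolding c'_def by (simp only: mult_ac)
      finally have B: "c2 * real M powr (1 + h) \<le> c' * \<epsilon> powr (-1/r)" .
      show "metric_entropy C \<epsilon> \<le> ereal (c' * \<epsilon> powr (-1/r))"
        using A B order_trans ereal_less_eq(3) by blast
    qed
    hence rin: "r \<in> entropy_speed_set C" unfolding entropy_speed_set_def using r0 by auto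
    hence "ereal r \<le> Sup (ereal ` entropy_speed_set C)" by (intro Sup_upper) auto
    thus ?thesis using rin unfolding entropy_speed_def by auto
  qed
  show ?thesis
  proof (rule dense_le)
    fix y assume y: "y < approx_speed C \<Sigma>"
    show "y \<le> entropy_speed C"
    proof (cases y)
      case (real r)
      show ?thesis
      proof (cases "r \<le> 0")
        case True
        hence "ereal r \<le> 0" by (simp add: zero_ereal_def)
        from order_trans[OF this nonneg] show ?thesis using real by simp
      next
        case False thus ?thesis using key y real by auto
      qed
    qed (use y in auto)
  qed
qed

end
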